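(* Let $R$ be a subring of a ring $S$, and assume that every semiprime factor ring of $R$ and of $S$ is left or right Goldie and that the prime radical of every factor ring of $R$ and of $S$ is nilpotent. Then for every $P\in\operatorname{Spec} S$ there exists $Q\in\operatorname{Spec} R$ such that $Q$ is minimal over $P\cap R$ and $Q^S\subseteq P$.
   Context: For an ideal $Q$ of $R$, $Q^S=\operatorname{ann}_S(S/SQ)$, the annihilator of the left $S$-module $S/SQ$. *)

theory Defs
  imports "HOL-Algebra.Algebra"
begin

text \<open>All rings are associative rings with identity, not necessarily commutative
(HOL-Algebra's ring). Ideals (ideal I A) are two-sided.\<close>

definition left_ideal :: "('a,'b) ring_scheme \<Rightarrow> 'a set \<Rightarrow> bool" where
  "left_ideal A L \<longleftrightarrow> subgroup L (add_monoid A) \<and>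
     (\<forall>r\<in>carrier A. \<forall>x\<in>L. r \<otimes>\<^bsub>A\<^esub> x \<in> L)"

definition right_ideal :: "('a,'b) ring_scheme \<Rightarrow> 'a set \<Rightarrow> bool" where
  "right_ideal A L \<longleftrightarrow> subgroup L (add_monoid A) \<and>
     (\<forall>r\<in>carrier A. \<forall>x\<in>L. x \<otimes>\<^bsub>A\<^esub> r \<in> L)"

definition prime_ideal_nc :: "('a,'b) ring_scheme \<Rightarrow> 'a set \<Rightarrow> bool" where
  "prime_ideal_nc A P \<longleftrightarrow> ideal P A \<and> P \<noteq> carrier A \<and>
     (\<forall>a\<in>carrier A. \<forall>b\<in>carrier A.
        (\<forall>r\<in>carrier A. a \<otimes>\<^bsub>A\<^esub> r \<otimes>\<^bsub>A\<^esub> b \<in> P) \<longrightarrow> a \<in> P \<or> b \<in> P)"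

definition Spec :: "('a,'b) ring_scheme \<Rightarrow> 'a set set" where
  "Spec A = {P. prime_ideal_nc A P}"

definition semiprime_ring :: "('a,'b) ring_scheme \<Rightarrow> bool" where
  "semiprime_ring A \<longleftrightarrow>
     (\<forall>a\<in>carrier A. (\<forall>r\<in>carrier A. a \<otimes>\<^bsub>A\<^esub> r \<otimes>\<^bsub>A\<^esub> a = \<zero>\<^bsub>A\<^esub>) \<longrightarrow> a = \<zero>\<^bsub>A\<^esub>)"

definition left_annihilator :: "('a,'b) ring_scheme \<Rightarrow> 'a set \<Rightarrow> 'a set" where
  "left_annihilator A Y = {r. r \<in> carrier A \<and> (\<forall>x\<in>Y. r \<otimes>\<^bsub>A\<^esub> x = \<zero>\<^bsub>A\<^esub>)}"

definition right_annihilator :: "('a,'b) ring_scheme \<Rightarrow> 'a set \<Rightarrow> 'a set" where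
  "right_annihilator A Y = {r. r \<in> carrier A \<and> (\<forall>x\<in>Y. x \<otimes>\<^bsub>A\<^esub> r = \<zero>\<^bsub>A\<^esub>)}"

definition independent_family :: "('a,'b) ring_scheme \<Rightarrow> (nat \<Rightarrow> 'a set) \<Rightarrow> bool" where
  "independent_family A L \<longleftrightarrow>
     (\<forall>k x. (\<forall>i\<le>k. x i \<in> L i) \<and> finsum A x {..k} = \<zero>\<^bsub>A\<^esub> \<longrightarrow> (\<forall>i\<le>k. x i = \<zero>\<^bsub>A\<^esub>))"

definition left_goldie :: "('a,'b) ring_scheme \<Rightarrow> bool" where
  "left_goldie A \<longleftrightarrow>
     (\<forall>f :: nat \<Rightarrow> 'a set.
        (\<forall>n. (\<exists>Y\<subseteq>carrier A. f n = left_annihilator A Y) \<and> f n \<subseteq> f (Suc n))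
        \<longrightarrow> (\<exists>m. \<forall>n\<ge>m. f n = f m)) \<and>
     \<not> (\<exists>L. (\<forall>n. left_ideal A (L n) \<and> L n \<noteq> {\<zero>\<^bsub>A\<^esub> }) \<and> independent_family A L)"

definition right_goldie :: "('a,'b) ring_scheme \<Rightarrow> bool" where
  "right_goldie A \<longleftrightarrow>
     (\<forall>f :: nat \<Rightarrow> 'a set.
        (\<forall>n. (\<exists>Y\<subseteq>carrier A. f n = right_annihilator A Y) \<and> f n \<subseteq> f (Suc n))
        \<longrightarrow> (\<exists>m. \<forall>n\<ge>m. f n = f m)) \<and>
     \<not> (\<exists>L. (\<forall>n. right_ideal A (L n) \<and> L n \<noteq> {\<zero>\<^bsub>A\<^esub> }) \<and> independent_family A L)"

text \<open>Prime radical: intersection of all prime ideals (the whole ring if there are none).\<close>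
definition prime_radical :: "('a,'b) ring_scheme \<Rightarrow> 'a set" where
  "prime_radical A = carrier A \<inter> \<Inter> (Spec A)"

definition nilpotent_set :: "('a,'b) ring_scheme \<Rightarrow> 'a set \<Rightarrow> bool" where
  "nilpotent_set A N \<longleftrightarrow>
     (\<exists>n. \<forall>xs. length xs = n \<and> set xs \<subseteq> N \<longrightarrow> foldr (\<lambda>x y. x \<otimes>\<^bsub>A\<^esub> y) xs \<one>\<^bsub>A\<^esub> = \<zero>\<^bsub>A\<^esub>)"

text \<open>SQ: the left S-submodule of S generated by Q (finite sums of s q).\<close>
definition left_gen :: "('a,'b) ring_scheme \<Rightarrow> 'a set \<Rightarrow> 'a set" where
  "left_gen S Q = {finsum S (\<lambda>i. s i \<otimes>\<^bsub>S\<^esub> q i) {..<(n::nat)} | n s q.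
       (\<forall>i<n. s i \<in> carrier S \<and> q i \<in> Q)}"

text \<open>Q^S = ann_S(S/SQ) = {x \<in> S. x S \<subseteq> SQ}.\<close>
definition ext_ideal :: "('a,'b) ring_scheme \<Rightarrow> 'a set \<Rightarrow> 'a set" where
  "ext_ideal S Q = {x \<in> carrier S. \<forall>s\<in>carrier S. x \<otimes>\<^bsub>S\<^esub> s \<in> left_gen S Q}"

definition minimal_prime_over :: "('a,'b) ring_scheme \<Rightarrow> 'a set \<Rightarrow> 'a set \<Rightarrow> bool" where
  "minimal_prime_over A I Q \<longleftrightarrow> Q \<in> Spec A \<and> I \<subseteq> Q \<and>
     (\<forall>Q'\<in>Spec A. I \<subseteq> Q' \<and> Q' \<subseteq> Q \<longrightarrow> Q' = Q)"

definition goldie_hyp :: "('a,'b) ring_scheme \<Rightarrow> bool" where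
  "goldie_hyp A \<longleftrightarrow>
     (\<forall>I. ideal I A \<longrightarrow>
        (semiprime_ring (A Quot I) \<longrightarrow> left_goldie (A Quot I) \<or> right_goldie (A Quot I)) \<and>
        nilpotent_set (A Quot I) (prime_radical (A Quot I)))"

end

theory Submission
  imports Defs
begin

definition lstable :: "('a,'b) ring_scheme \<Rightarrow> 'a set \<Rightarrow> bool" where
  "lstable A Y \<longleftrightarrow> Y \<subseteq> carrier A \<and> (\<forall>r\<in>carrier A. \<forall>x\<in>Y. r \<otimes>\<^bsub>A\<^esub> x \<in> Y)"

definition goodD :: "('a,'b) ring_scheme \<Rightarrow> 'a set \<Rightarrow> bool" where
  "goodD A D \<longleftrightarrow> (\<exists>F. finite F \<and> F \<subseteq> Spec A \<and> D = carrier A \<inter> \<Inter>F)"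

definition annset :: "('a,'b) ring_scheme \<Rightarrow> 'a set set" where
  "annset A = {left_annihilator A Y | Y. lstable A Y}"

context ring begin

lemma lann_ideal:
  assumes "lstable R Y" shows "ideal (left_annihilator R Y) R"
proof (rule idealI)
  show "ring R" by (rule ring_axioms)
  show "subgroup (left_annihilator R Y) (add_monoid R)"
    using assms
    by (intro add.subgroupI) (auto simp: left_annihilator_def lstable_def l_distr l_minus subset_iff)
next
  fix a x assume a: "a \<in> left_annihilator R Y" and x: "x \<in> carrier R"
  show "x \<otimes> a \<in> left_annihilator R Y"
    using a x assms by (auto simp: left_annihilator_def lstable_def m_assoc subset_iff)
  show "a \<otimes> x \<in> left_annihilator R Y"
    using a x assms by (auto simp: left_annihilator_def lstable_def m_assoc subset_iff)
qed

lemma lann_sub: "left_annihilator R Y \<subseteq> carrier R"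
  by (auto simp: left_annihilator_def)

lemma lann_anti: "Y \<subseteq> Z \<Longrightarrow> left_annihilator R Z \<subseteq> left_annihilator R Y"
  by (auto simp: left_annihilator_def)

lemma ideal_lstable: "ideal I R \<Longrightarrow> lstable R I"
  by (auto simp: lstable_def ideal.I_l_closed ideal_def additive_subgroup.a_subset)

lemma sp_L3:
  assumes sp: "semiprime_ring R" and Y: "lstable R Y"
    and z: "z \<in> left_annihilator R Y" and x: "x \<in> Y"
  shows "x \<otimes> z = \<zero>"
proof -
  have xc: "x \<in> carrier R" and zc: "z \<in> carrier R" using Y x z by (auto simp: lstable_def left_annihilator_def)
  have "\<forall>r\<in>carrier R. x \<otimes> z \<otimes> r \<otimes> (x \<otimes> z) = \<zero>"
  proof
    fix r assume r: "r \<in> carrier R"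
    have "r \<otimes> x \<in> Y" using Y r x by (auto simp: lstable_def)
    hence "z \<otimes> (r \<otimes> x) = \<zero>" using z by (auto simp: left_annihilator_def)
    have "x \<otimes> z \<otimes> r \<otimes> (x \<otimes> z) = x \<otimes> (z \<otimes> (r \<otimes> x)) \<otimes> z"
      using xc zc r by (simp add: m_assoc)
    also have "\<dots> = x \<otimes> \<zero> \<otimes> z" by (simp only: \<open>z \<otimes> (r \<otimes> x) = \<zero>\<close>)
    also have "\<dots> = \<zero>" using xc zc by simp
    finally show "x \<otimes> z \<otimes> r \<otimes> (x \<otimes> z) = \<zero>" .
  qed
  thus ?thesis using sp xc zc by (auto simp: semiprime_ring_def)
qed

lemma sp_L4:
  assumes sp: "semiprime_ring R" and Y: "ideal Y R"
  shows "left_annihilator R Y = right_annihilator R Y"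
proof
  show "left_annihilator R Y \<subseteq> right_annihilator R Y"
    using sp_L3[OF sp ideal_lstable[OF Y]] by (auto simp: left_annihilator_def right_annihilator_def)
next
  show "right_annihilator R Y \<subseteq> left_annihilator R Y"
  proof
    fix z assume z: "z \<in> right_annihilator R Y"
    have zc: "z \<in> carrier R" using z by (auto simp: right_annihilator_def)
    have "z \<otimes> x = \<zero>" if x: "x \<in> Y" for x
    proof -
      have xc: "x \<in> carrier R" using x Y ideal_lstable[OF Y] by (auto simp: lstable_def)
      have "\<forall>r\<in>carrier R. z \<otimes> x \<otimes> r \<otimes> (z \<otimes> x) = \<zero>"
      proof
        fix r assume r: "r \<in> carrier R"
        have "x \<otimes> r \<in> Y" using Y r x by (simp add: ideal.I_r_closed)
        hence "x \<otimes> r \<otimes> z = \<zero>" using z by (auto simp: right_annihilator_def)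
        have "z \<otimes> x \<otimes> r \<otimes> (z \<otimes> x) = z \<otimes> (x \<otimes> r \<otimes> z) \<otimes> x"
          using xc zc r by (simp add: m_assoc)
        also have "\<dots> = z \<otimes> \<zero> \<otimes> x" by (simp only: \<open>x \<otimes> r \<otimes> z = \<zero>\<close>)
        also have "\<dots> = \<zero>" using xc zc by simp
        finally show "z \<otimes> x \<otimes> r \<otimes> (z \<otimes> x) = \<zero>" .
      qed
      thus ?thesis using sp xc zc by (auto simp: semiprime_ring_def)
    qed
    thus "z \<in> left_annihilator R Y" using zc by (auto simp: left_annihilator_def)
  qed
qed

lemma sp_L5:
  assumes sp: "semiprime_ring R" and Y: "lstable R Y"
  shows "Y \<subseteq> left_annihilator R (left_annihilator R Y)"
  using sp_L3[OF sp Y] Y by (auto simp: left_annihilator_def lstable_def)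

lemma sp_L7:
  assumes sp: "semiprime_ring R" and Y: "lstable R Y"
  shows "left_annihilator R Y = right_annihilator R (left_annihilator R (left_annihilator R Y))"
proof -
  have I1: "ideal (left_annihilator R Y) R" by (rule lann_ideal[OF Y])
  have I2: "ideal (left_annihilator R (left_annihilator R Y)) R" by (rule lann_ideal[OF ideal_lstable[OF I1]])
  have "left_annihilator R Y = left_annihilator R (left_annihilator R (left_annihilator R Y))"
  proof
    show "left_annihilator R Y \<subseteq> left_annihilator R (left_annihilator R (left_annihilator R Y))"
      by (rule sp_L5[OF sp ideal_lstable[OF I1]])
    show "left_annihilator R (left_annihilator R (left_annihilator R Y)) \<subseteq> left_annihilator R Y"
      by (rule lann_anti[OF sp_L5[OF sp Y]])
  qed
  thus ?thesis using sp_L4[OF sp I2] by simp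
qed


lemma split_step:
  assumes sp: "semiprime_ring R" and Y: "lstable R Y"
    and up: "\<forall>D'\<in>annset R. left_annihilator R Y \<subset> D' \<longrightarrow> goodD R D'"
  shows "goodD R (left_annihilator R Y)"
proof -
  define D where "D = left_annihilator R Y"
  have Did: "ideal D R" unfolding D_def by (rule lann_ideal[OF Y])
  have Dc: "D \<subseteq> carrier R" unfolding D_def by (rule lann_sub)
  have Yc: "Y \<subseteq> carrier R" and Ys: "\<And>r y. r \<in> carrier R \<Longrightarrow> y \<in> Y \<Longrightarrow> r \<otimes> y \<in> Y"
    using Y by (auto simp: lstable_def)
  show ?thesis
  proof (cases "D = carrier R")
    case True
    then show ?thesis unfolding goodD_def D_def[symmetric] by (intro exI[of _ "{}"]) auto
  next
    case Dne: False
    show ?thesis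
    proof (cases "prime_ideal_nc R D")
      case True
      then show ?thesis unfolding goodD_def D_def[symmetric] using Dc
        by (intro exI[of _ "{D}"]) (auto simp: Spec_def)
    next
      case False
      then obtain a b where a: "a \<in> carrier R" and b: "b \<in> carrier R"
        and ab: "\<And>r. r \<in> carrier R \<Longrightarrow> a \<otimes> r \<otimes> b \<in> D" and aD: "a \<notin> D" and bD: "b \<notin> D"
        using Did Dne unfolding prime_ideal_nc_def by blast
      define Y1 where "Y1 = {s \<otimes> b \<otimes> y | s y. s \<in> carrier R \<and> y \<in> Y}"
      define E where "E = left_annihilator R Y1"
      have Y1s: "lstable R Y1" unfolding lstable_def Y1_def
      proof (intro conjI ballI subsetI)
        fix x assume "x \<in> {s \<otimes> b \<otimes> y | s y. s \<in> carrier R \<and> y \<in> Y}"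
        then show "x \<in> carrier R" using b Yc by auto
      next
        fix r x assume r: "r \<in> carrier R" and "x \<in> {s \<otimes> b \<otimes> y | s y. s \<in> carrier R \<and> y \<in> Y}"
        then obtain s y where s: "s \<in> carrier R" and y: "y \<in> Y" and x: "x = s \<otimes> b \<otimes> y" by auto
        have "r \<otimes> x = (r \<otimes> s) \<otimes> b \<otimes> y" using r s b y Yc x by (auto simp: m_assoc)
        then show "r \<otimes> x \<in> {s \<otimes> b \<otimes> y | s y. s \<in> carrier R \<and> y \<in> Y}" using r s y by blast
      qed
      have Eid: "ideal E R" unfolding E_def by (rule lann_ideal[OF Y1s])
      have Ec: "E \<subseteq> carrier R" unfolding E_def by (rule lann_sub)
      define Y2 where "Y2 = {e \<otimes> y | e y. e \<in> E \<and> y \<in> Y}"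
      have Y2s: "lstable R Y2" unfolding lstable_def Y2_def
      proof (intro conjI ballI subsetI)
        fix x assume "x \<in> {e \<otimes> y | e y. e \<in> E \<and> y \<in> Y}"
        then show "x \<in> carrier R" using Ec Yc by auto
      next
        fix r x assume r: "r \<in> carrier R" and "x \<in> {e \<otimes> y | e y. e \<in> E \<and> y \<in> Y}"
        then obtain e y where e: "e \<in> E" and y: "y \<in> Y" and x: "x = e \<otimes> y" by auto
        have "e \<in> carrier R" "y \<in> carrier R" using e y Yc Ec by auto
        then have "r \<otimes> x = (r \<otimes> e) \<otimes> y" using r x by (simp add: m_assoc)
        moreover have "r \<otimes> e \<in> E" using Eid e r by (simp add: ideal.I_l_closed)
        ultimately show "r \<otimes> x \<in> {e \<otimes> y | e y. e \<in> E \<and> y \<in> Y}" using y by blast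
      qed
      define E2 where "E2 = left_annihilator R Y2"
      have E2c: "E2 \<subseteq> carrier R" unfolding E2_def by (rule lann_sub)
      have DE: "D \<subseteq> E"
      proof
        fix z assume z: "z \<in> D"
        have zc: "z \<in> carrier R" using z Dc by auto
        have "z \<otimes> w = \<zero>" if "w \<in> Y1" for w
        proof -
          obtain s y where s: "s \<in> carrier R" and y: "y \<in> Y" and w: "w = s \<otimes> b \<otimes> y"
            using \<open>w \<in> Y1\<close> unfolding Y1_def by auto
          have "s \<otimes> b \<otimes> y \<in> Y" using Ys s b y by auto
          then show ?thesis using z w unfolding D_def left_annihilator_def by auto
        qed
        then show "z \<in> E" using zc unfolding E_def left_annihilator_def by auto
      qed
      have aE: "a \<in> E"
      proof -
        have "a \<otimes> w = \<zero>" if "w \<in> Y1" for w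
        proof -
          obtain s y where s: "s \<in> carrier R" and y: "y \<in> Y" and w: "w = s \<otimes> b \<otimes> y"
            using \<open>w \<in> Y1\<close> unfolding Y1_def by auto
          have "a \<otimes> s \<otimes> b \<in> D" using ab s by auto
          then have "a \<otimes> s \<otimes> b \<otimes> y = \<zero>" using y unfolding D_def left_annihilator_def by auto
          moreover have "a \<otimes> w = a \<otimes> s \<otimes> b \<otimes> y" using w a s b y Yc by (auto simp: m_assoc)
          ultimately show ?thesis by simp
        qed
        then show ?thesis using a unfolding E_def left_annihilator_def by auto
      qed
      have DE2: "D \<subseteq> E2"
      proof
        fix z assume z: "z \<in> D"
        have zc: "z \<in> carrier R" using z Dc by auto
        have "z \<otimes> w = \<zero>" if "w \<in> Y2" for w
        proof -
          obtain e y where e: "e \<in> E" and y: "y \<in> Y" and w: "w = e \<otimes> y"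
            using \<open>w \<in> Y2\<close> unfolding Y2_def by auto
          have "e \<otimes> y \<in> Y" using Ys e Ec y by auto
          then show ?thesis using z w unfolding D_def left_annihilator_def by auto
        qed
        then show "z \<in> E2" using zc unfolding E2_def left_annihilator_def by auto
      qed
      have bE2: "b \<in> E2"
      proof -
        have "b \<otimes> w = \<zero>" if "w \<in> Y2" for w
        proof -
          obtain e y where e: "e \<in> E" and y: "y \<in> Y" and w: "w = e \<otimes> y"
            using \<open>w \<in> Y2\<close> unfolding Y2_def by auto
          have ec: "e \<in> carrier R" and yc: "y \<in> carrier R" using e Ec y Yc by auto
          have "\<forall>r\<in>carrier R. b \<otimes> (e \<otimes> y) \<otimes> r \<otimes> (b \<otimes> (e \<otimes> y)) = \<zero>"
          proof
            fix r assume r: "r \<in> carrier R"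
            have "e \<otimes> y \<in> Y" using Ys ec y by auto
            then have "(y \<otimes> r) \<otimes> b \<otimes> (e \<otimes> y) \<in> Y1" using r yc unfolding Y1_def by blast
            then have 0: "e \<otimes> ((y \<otimes> r) \<otimes> b \<otimes> (e \<otimes> y)) = \<zero>" using e unfolding E_def left_annihilator_def by auto
            have "b \<otimes> (e \<otimes> y) \<otimes> r \<otimes> (b \<otimes> (e \<otimes> y)) = b \<otimes> (e \<otimes> ((y \<otimes> r) \<otimes> b \<otimes> (e \<otimes> y)))"
              using b ec yc r by (simp add: m_assoc)
            also have "\<dots> = b \<otimes> \<zero>" by (simp only: 0)
            also have "\<dots> = \<zero>" using b by simp
            finally show "b \<otimes> (e \<otimes> y) \<otimes> r \<otimes> (b \<otimes> (e \<otimes> y)) = \<zero>" .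
          qed
          then have "b \<otimes> (e \<otimes> y) = \<zero>" using sp b ec yc unfolding semiprime_ring_def by auto
          then show ?thesis using w by simp
        qed
        then show ?thesis using b unfolding E2_def left_annihilator_def by auto
      qed
      have EE2: "E \<inter> E2 \<subseteq> D"
      proof
        fix z assume z: "z \<in> E \<inter> E2"
        have zc: "z \<in> carrier R" using z Ec by auto
        have "z \<otimes> y = \<zero>" if y: "y \<in> Y" for y
        proof -
          have yc: "y \<in> carrier R" using y Yc by auto
          have "\<forall>r\<in>carrier R. z \<otimes> y \<otimes> r \<otimes> (z \<otimes> y) = \<zero>"
          proof
            fix r assume r: "r \<in> carrier R"
            have "y \<otimes> r \<otimes> z \<in> E" using Eid z r yc by (simp add: ideal.I_l_closed)
            then have "(y \<otimes> r \<otimes> z) \<otimes> y \<in> Y2" using y unfolding Y2_def by blast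
            then have 0: "z \<otimes> ((y \<otimes> r \<otimes> z) \<otimes> y) = \<zero>" using z unfolding E2_def left_annihilator_def by auto
            have "z \<otimes> y \<otimes> r \<otimes> (z \<otimes> y) = z \<otimes> ((y \<otimes> r \<otimes> z) \<otimes> y)"
              using zc yc r by (simp add: m_assoc)
            also have "\<dots> = \<zero>" by (rule 0)
            finally show "z \<otimes> y \<otimes> r \<otimes> (z \<otimes> y) = \<zero>" .
          qed
          then show ?thesis using sp zc yc unfolding semiprime_ring_def by auto
        qed
        then show "z \<in> D" using zc unfolding D_def left_annihilator_def by auto
      qed
      have "E \<in> annset R" unfolding annset_def E_def using Y1s by blast
      moreover have "D \<subset> E" using DE aE aD by auto
      ultimately have "goodD R E" using up unfolding D_def by auto
      then obtain F1 where F1: "finite F1" "F1 \<subseteq> Spec R" "E = carrier R \<inter> \<Inter>F1" unfolding goodD_def by auto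
      have "E2 \<in> annset R" unfolding annset_def E2_def using Y2s by blast
      moreover have "D \<subset> E2" using DE2 bE2 bD by auto
      ultimately have "goodD R E2" using up unfolding D_def by auto
      then obtain F2 where F2: "finite F2" "F2 \<subseteq> Spec R" "E2 = carrier R \<inter> \<Inter>F2" unfolding goodD_def by auto
      have "D = E \<inter> E2" using DE DE2 EE2 by auto
      then have "D = carrier R \<inter> \<Inter>(F1 \<union> F2)" using F1 F2 by auto
      then show ?thesis unfolding goodD_def D_def[symmetric] using F1 F2 by (intro exI[of _ "F1 \<union> F2"]) auto
    qed
  qed
qed

end

lemma finite_primes:
  assumes A: "ring A" and sp: "semiprime_ring A" and G: "left_goldie A \<or> right_goldie A"
  shows "\<exists>F. finite F \<and> F \<subseteq> Spec A \<and> carrier A \<inter> \<Inter>F = {\<zero>\<^bsub>A\<^esub>}"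
proof -
  interpret ring A by (rule A)
  have allgood: "\<forall>D\<in>annset A. goodD A D"
  proof (rule ccontr)
    assume "\<not> ?thesis"
    then obtain D0 where D0: "D0 \<in> annset A \<and> \<not> goodD A D0" by auto
    have step: "\<exists>D'. (D' \<in> annset A \<and> \<not> goodD A D') \<and> D \<subset> D'"
      if "D \<in> annset A \<and> \<not> goodD A D" for D
    proof -
      have "D \<in> annset A" using that by simp
      then obtain Y where Y: "lstable A Y" "D = left_annihilator A Y" unfolding annset_def by auto
      show ?thesis
      proof (rule ccontr)
        assume "\<not> ?thesis"
        then have "\<forall>D'\<in>annset A. left_annihilator A Y \<subset> D' \<longrightarrow> goodD A D'" using Y(2) by blast
        then have "goodD A D" using split_step[OF sp Y(1)] Y(2) by simp
        then show False using that by simp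
      qed
    qed
    have "\<exists>f. \<forall>n. (f n \<in> annset A \<and> \<not> goodD A (f n)) \<and> f n \<subset> f (Suc n)"
    proof (rule dependent_nat_choice)
      show "\<exists>x. x \<in> annset A \<and> \<not> goodD A x" using D0 by blast
      fix x :: "'a set" and n :: nat assume "x \<in> annset A \<and> \<not> goodD A x"
      then show "\<exists>y. (y \<in> annset A \<and> \<not> goodD A y) \<and> x \<subset> y" by (rule step)
    qed
    then obtain f where f0: "\<forall>n. (f n \<in> annset A \<and> \<not> goodD A (f n)) \<and> f n \<subset> f (Suc n)" by blast
    have f: "\<And>n. f n \<in> annset A \<and> \<not> goodD A (f n)" "\<And>n. f n \<subset> f (Suc n)" using f0 by auto
    have ex: "\<forall>n. \<exists>Y. lstable A Y \<and> f n = left_annihilator A Y" using f(1) unfolding annset_def by blast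
    obtain Yf where Yf0: "\<forall>n. lstable A (Yf n) \<and> f n = left_annihilator A (Yf n)" using choice[OF ex] by blast
    have Yf: "\<And>n. lstable A (Yf n) \<and> f n = left_annihilator A (Yf n)" using Yf0 by blast
    have "\<exists>m. \<forall>n\<ge>m. f n = f m"
      using G
    proof
      assume "left_goldie A"
      then have acc: "\<forall>g :: nat \<Rightarrow> 'a set. (\<forall>n. (\<exists>Y\<subseteq>carrier A. g n = left_annihilator A Y) \<and> g n \<subseteq> g (Suc n))
        \<longrightarrow> (\<exists>m. \<forall>n\<ge>m. g n = g m)" unfolding left_goldie_def by (rule conjunct1)
      show ?thesis
      proof (rule acc[rule_format], intro allI conjI)
        fix n
        have "Yf n \<subseteq> carrier A" "f n = left_annihilator A (Yf n)" using Yf[of n] unfolding lstable_def by simp_all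
        then show "\<exists>Y\<subseteq>carrier A. f n = left_annihilator A Y" by blast
        show "f n \<subseteq> f (Suc n)" using f(2)[of n] by auto
      qed
    next
      assume "right_goldie A"
      then have acc: "\<forall>g :: nat \<Rightarrow> 'a set. (\<forall>n. (\<exists>Y\<subseteq>carrier A. g n = right_annihilator A Y) \<and> g n \<subseteq> g (Suc n))
        \<longrightarrow> (\<exists>m. \<forall>n\<ge>m. g n = g m)" unfolding right_goldie_def by (rule conjunct1)
      show ?thesis
      proof (rule acc[rule_format], intro allI conjI)
        fix n
        show "\<exists>Y\<subseteq>carrier A. f n = right_annihilator A Y"
        proof (intro exI conjI)
          show "left_annihilator A (left_annihilator A (Yf n)) \<subseteq> carrier A" by (rule lann_sub)
          have "f n = left_annihilator A (Yf n)" using Yf[of n] by simp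
          also have "\<dots> = right_annihilator A (left_annihilator A (left_annihilator A (Yf n)))"
            by (rule sp_L7[OF sp]) (use Yf[of n] in simp)
          finally show "f n = right_annihilator A (left_annihilator A (left_annihilator A (Yf n)))" .
        qed
        show "f n \<subseteq> f (Suc n)" using f(2)[of n] by auto
      qed
    qed
    then obtain m where m: "\<forall>n\<ge>m. f n = f m" by blast
    have "f (Suc m) = f m" using m[rule_format, of "Suc m"] by simp
    then show False using f(2)[of m] by auto
  qed
  have "lstable A (carrier A)" unfolding lstable_def by auto
  then have "left_annihilator A (carrier A) \<in> annset A" unfolding annset_def by auto
  moreover have "left_annihilator A (carrier A) = {\<zero>\<^bsub>A\<^esub>}"
  proof
    show "left_annihilator A (carrier A) \<subseteq> {\<zero>\<^bsub>A\<^esub>}"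
    proof
      fix z assume "z \<in> left_annihilator A (carrier A)"
      then have z: "z \<in> carrier A" and h: "\<forall>x\<in>carrier A. z \<otimes>\<^bsub>A\<^esub> x = \<zero>\<^bsub>A\<^esub>" unfolding left_annihilator_def by auto
      have "z = z \<otimes>\<^bsub>A\<^esub> \<one>\<^bsub>A\<^esub>" using z by simp
      also have "\<dots> = \<zero>\<^bsub>A\<^esub>" using h by simp
      finally show "z \<in> {\<zero>\<^bsub>A\<^esub>}" by simp
    qed
    show "{\<zero>\<^bsub>A\<^esub>} \<subseteq> left_annihilator A (carrier A)" unfolding left_annihilator_def by auto
  qed
  ultimately have "goodD A {\<zero>\<^bsub>A\<^esub>}" using allgood by simp
  then obtain F where "finite F" "F \<subseteq> Spec A" "{\<zero>\<^bsub>A\<^esub>} = carrier A \<inter> \<Inter>F" unfolding goodD_def by blast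
  then show ?thesis by (intro exI[of _ F]) simp
qed

definition prods :: "('a,'b) ring_scheme \<Rightarrow> 'a set list \<Rightarrow> 'a set" where
  "prods A Qs = {foldr (\<lambda>x y. x \<otimes>\<^bsub>A\<^esub> y) qs \<one>\<^bsub>A\<^esub> | qs. list_all2 (\<lambda>q Q. q \<in> Q) qs Qs}"

context ring begin

lemma LG_ext:
  assumes Y: "Y \<subseteq> carrier R" and u: "u \<in> left_gen R Y" and t: "t \<in> carrier R" and y: "y \<in> Y"
  shows "t \<otimes> y \<oplus> u \<in> left_gen R Y"
proof -
  obtain n s q where u': "u = finsum R (\<lambda>i. s i \<otimes> q i) {..<(n::nat)}" and sq: "\<forall>i<n. s i \<in> carrier R \<and> q i \<in> Y"
    using u unfolding left_gen_def mem_Collect_eq by blast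
  define s' where "s' = s(n := t)"
  define q' where "q' = q(n := y)"
  have sq': "\<forall>i<Suc n. s' i \<in> carrier R \<and> q' i \<in> Y" using sq t y unfolding s'_def q'_def by (auto simp: less_Suc_eq)
  have fc: "(\<lambda>i. s' i \<otimes> q' i) \<in> {..<n} \<rightarrow> carrier R"
  proof
    fix i assume "i \<in> {..<n}"
    then have "s' i \<in> carrier R \<and> q' i \<in> Y" using sq' by auto
    then show "s' i \<otimes> q' i \<in> carrier R" using Y by auto
  qed
  have "finsum R (\<lambda>i. s' i \<otimes> q' i) {..<Suc n} = (s' n \<otimes> q' n) \<oplus> finsum R (\<lambda>i. s' i \<otimes> q' i) {..<n}"
    unfolding lessThan_Suc
  proof (rule finsum_insert)
    show "(\<lambda>i. s' i \<otimes> q' i) n \<in> carrier R" using sq' Y by auto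
  qed (use fc in auto)
  also have "finsum R (\<lambda>i. s' i \<otimes> q' i) {..<n} = u"
  proof -
    have fc0: "(\<lambda>i. s i \<otimes> q i) \<in> {..<n} \<rightarrow> carrier R"
    proof
      fix i assume "i \<in> {..<n}"
      then have "s i \<in> carrier R \<and> q i \<in> Y" using sq by auto
      then show "s i \<otimes> q i \<in> carrier R" using Y by auto
    qed
    show ?thesis unfolding u'
    proof (rule finsum_cong')
      show "{..<n} = {..<n}" by simp
      show "(\<lambda>i. s i \<otimes> q i) \<in> {..<n} \<rightarrow> carrier R" by (rule fc0)
      fix i assume "i \<in> {..<n}"
      then show "s' i \<otimes> q' i = s i \<otimes> q i" by (simp add: s'_def q'_def)
    qed
  qed
  finally have "finsum R (\<lambda>i. s' i \<otimes> q' i) {..<Suc n} = t \<otimes> y \<oplus> u" by (simp add: s'_def q'_def)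
  then show ?thesis unfolding left_gen_def mem_Collect_eq
    by (intro exI[of _ "Suc n"] exI[of _ s'] exI[of _ q'] conjI) (simp_all add: sq')
qed

lemma LG_induct:
  assumes Y: "Y \<subseteq> carrier R" and M0: "\<zero> \<in> M"
    and Ms: "\<And>t y u. t \<in> carrier R \<Longrightarrow> y \<in> Y \<Longrightarrow> u \<in> M \<Longrightarrow> u \<in> carrier R \<Longrightarrow> t \<otimes> y \<oplus> u \<in> M"
  shows "left_gen R Y \<subseteq> M"
proof
  fix u assume "u \<in> left_gen R Y"
  then obtain n s q where u': "u = finsum R (\<lambda>i. s i \<otimes> q i) {..<(n::nat)}" and sq: "\<forall>i<n. s i \<in> carrier R \<and> q i \<in> Y"
    unfolding left_gen_def mem_Collect_eq by blast
  have "(\<forall>i<m. s i \<in> carrier R \<and> q i \<in> Y) \<longrightarrow> finsum R (\<lambda>i. s i \<otimes> q i) {..<m} \<in> M" for m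
  proof (induction m)
    case 0
    then show ?case using M0 by simp
  next
    case (Suc m)
    show ?case
    proof
      assume h: "\<forall>i<Suc m. s i \<in> carrier R \<and> q i \<in> Y"
      have fc: "(\<lambda>i. s i \<otimes> q i) \<in> {..<m} \<rightarrow> carrier R"
      proof
        fix i assume "i \<in> {..<m}"
        then have "s i \<in> carrier R \<and> q i \<in> Y" using h by auto
        then show "s i \<otimes> q i \<in> carrier R" using Y by auto
      qed
      have "finsum R (\<lambda>i. s i \<otimes> q i) {..<Suc m} = (s m \<otimes> q m) \<oplus> finsum R (\<lambda>i. s i \<otimes> q i) {..<m}"
        unfolding lessThan_Suc using fc h Y by (intro finsum_insert) auto
      moreover have "finsum R (\<lambda>i. s i \<otimes> q i) {..<m} \<in> M" using Suc h by auto
      moreover have "finsum R (\<lambda>i. s i \<otimes> q i) {..<m} \<in> carrier R" using fc by (intro finsum_closed) auto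
      ultimately show "finsum R (\<lambda>i. s i \<otimes> q i) {..<Suc m} \<in> M" using Ms h by auto
    qed
  qed
  then show "u \<in> M" using u' sq by blast
qed

lemma LG_zero: "\<zero> \<in> left_gen R Y"
  unfolding left_gen_def mem_Collect_eq
  by (rule exI[of _ "0::nat"], rule exI[of _ "\<lambda>_. \<one>"], rule exI[of _ "\<lambda>_. \<one>"]) simp

lemma LG_carrier: "Y \<subseteq> carrier R \<Longrightarrow> left_gen R Y \<subseteq> carrier R"
  by (rule LG_induct) auto

lemma LG_add:
  assumes Y: "Y \<subseteq> carrier R" and u: "u \<in> left_gen R Y" and v: "v \<in> left_gen R Y"
  shows "u \<oplus> v \<in> left_gen R Y"
proof -
  have "left_gen R Y \<subseteq> {u \<in> carrier R. \<forall>v\<in>left_gen R Y. u \<oplus> v \<in> left_gen R Y}"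
  proof (rule LG_induct[OF Y])
    show "\<zero> \<in> {u \<in> carrier R. \<forall>v\<in>left_gen R Y. u \<oplus> v \<in> left_gen R Y}"
      using LG_carrier[OF Y] by auto
    fix t y u assume t: "t \<in> carrier R" and y: "y \<in> Y" and u: "u \<in> {u \<in> carrier R. \<forall>v\<in>left_gen R Y. u \<oplus> v \<in> left_gen R Y}"
    have yc: "y \<in> carrier R" using y Y by auto
    show "t \<otimes> y \<oplus> u \<in> {u \<in> carrier R. \<forall>v\<in>left_gen R Y. u \<oplus> v \<in> left_gen R Y}"
    proof (intro CollectI conjI ballI)
      show "t \<otimes> y \<oplus> u \<in> carrier R" using t yc u by auto
      fix v assume v: "v \<in> left_gen R Y"
      have vc: "v \<in> carrier R" using v LG_carrier[OF Y] by auto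
      have "t \<otimes> y \<oplus> u \<oplus> v = t \<otimes> y \<oplus> (u \<oplus> v)" using t yc u vc by (simp add: a_assoc)
      moreover have "u \<oplus> v \<in> left_gen R Y" using u v by auto
      ultimately show "t \<otimes> y \<oplus> u \<oplus> v \<in> left_gen R Y" using LG_ext[OF Y _ t y] by simp
    qed
  qed
  then show ?thesis using u v by auto
qed

lemma LG_mono: "Y \<subseteq> Z \<Longrightarrow> left_gen R Y \<subseteq> left_gen R Z"
  unfolding left_gen_def by blast

lemma LG_ideal:
  assumes J: "ideal J R" and YJ: "Y \<subseteq> J"
  shows "left_gen R Y \<subseteq> J"
proof -
  have Jc: "J \<subseteq> carrier R" using J by (simp add: ideal.axioms(1) additive_subgroup.a_subset)
  show ?thesis
  proof (rule LG_induct)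
    show "Y \<subseteq> carrier R" using YJ Jc by auto
    show "\<zero> \<in> J" using J by (simp add: additive_subgroup.zero_closed ideal.axioms(1))
    fix t y u assume "t \<in> carrier R" "y \<in> Y" "u \<in> J" "u \<in> carrier R"
    then have "t \<otimes> y \<in> J" using ideal.I_l_closed[OF J, of y t] YJ by blast
    then show "t \<otimes> y \<oplus> u \<in> J" using \<open>u \<in> J\<close>
      by (rule additive_subgroup.a_closed[OF ideal.axioms(1)[OF J]])
  qed
qed

lemma LG_one: "\<one> \<in> left_gen R {\<one>}"
proof -
  have "\<one> \<otimes> \<one> \<oplus> \<zero> \<in> left_gen R {\<one>}" by (rule LG_ext) (auto intro: LG_zero)
  then show ?thesis by simp
qed

lemma LG_rmul:
  assumes Q: "Q \<subseteq> carrier R" and Y: "Y \<subseteq> carrier R" and w: "w \<in> left_gen R Q" and y: "y \<in> Y"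
  shows "w \<otimes> y \<in> left_gen R {q \<otimes> y | q y. q \<in> Q \<and> y \<in> Y}"
proof -
  let ?QY = "{q \<otimes> y | q y. q \<in> Q \<and> y \<in> Y}"
  have QY: "?QY \<subseteq> carrier R" using Q Y by auto
  have yc: "y \<in> carrier R" using y Y by auto
  have "left_gen R Q \<subseteq> {w \<in> carrier R. w \<otimes> y \<in> left_gen R ?QY}"
  proof (rule LG_induct[OF Q])
    show "\<zero> \<in> {w \<in> carrier R. w \<otimes> y \<in> left_gen R ?QY}" using yc LG_zero by auto
    fix t q u assume t: "t \<in> carrier R" and q: "q \<in> Q" and u: "u \<in> {w \<in> carrier R. w \<otimes> y \<in> left_gen R ?QY}"
    have qc: "q \<in> carrier R" using q Q by auto
    have eq: "(t \<otimes> q \<oplus> u) \<otimes> y = t \<otimes> (q \<otimes> y) \<oplus> u \<otimes> y" using t qc u yc by (simp add: l_distr m_assoc)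
    have qy: "q \<otimes> y \<in> ?QY" using q y by blast
    have uy: "u \<otimes> y \<in> left_gen R ?QY" using u by blast
    have "t \<otimes> (q \<otimes> y) \<oplus> u \<otimes> y \<in> left_gen R ?QY" by (rule LG_ext[OF QY uy t qy])
    then have "(t \<otimes> q \<oplus> u) \<otimes> y \<in> left_gen R ?QY" by (simp only: eq)
    moreover have "t \<otimes> q \<oplus> u \<in> carrier R" using t qc u by auto
    ultimately show "t \<otimes> q \<oplus> u \<in> {w \<in> carrier R. w \<otimes> y \<in> left_gen R ?QY}" by blast
  qed
  then show ?thesis using w by auto
qed

lemma LG_key:
  assumes Q: "Q \<subseteq> carrier R" and Y: "Y \<subseteq> carrier R" and x: "x \<in> ext_ideal R Q"
    and s: "s \<in> carrier R" and u: "u \<in> left_gen R Y"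
  shows "x \<otimes> s \<otimes> u \<in> left_gen R {q \<otimes> y | q y. q \<in> Q \<and> y \<in> Y}"
proof -
  let ?QY = "{q \<otimes> y | q y. q \<in> Q \<and> y \<in> Y}"
  have QY: "?QY \<subseteq> carrier R" using Q Y by auto
  have xc: "x \<in> carrier R" and xQ: "\<And>s. s \<in> carrier R \<Longrightarrow> x \<otimes> s \<in> left_gen R Q"
    using x unfolding ext_ideal_def by auto
  have "left_gen R Y \<subseteq> {u \<in> carrier R. \<forall>s\<in>carrier R. x \<otimes> s \<otimes> u \<in> left_gen R ?QY}"
  proof (rule LG_induct[OF Y])
    show "\<zero> \<in> {u \<in> carrier R. \<forall>s\<in>carrier R. x \<otimes> s \<otimes> u \<in> left_gen R ?QY}" using xc LG_zero by auto
    fix t y u assume t: "t \<in> carrier R" and y: "y \<in> Y" and u: "u \<in> {u \<in> carrier R. \<forall>s\<in>carrier R. x \<otimes> s \<otimes> u \<in> left_gen R ?QY}"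
    have yc: "y \<in> carrier R" using y Y by auto
    show "t \<otimes> y \<oplus> u \<in> {u \<in> carrier R. \<forall>s\<in>carrier R. x \<otimes> s \<otimes> u \<in> left_gen R ?QY}"
    proof (intro CollectI conjI ballI)
      show "t \<otimes> y \<oplus> u \<in> carrier R" using t yc u by auto
      fix s assume s: "s \<in> carrier R"
      have eq: "x \<otimes> s \<otimes> (t \<otimes> y \<oplus> u) = (x \<otimes> (s \<otimes> t)) \<otimes> y \<oplus> x \<otimes> s \<otimes> u"
        using xc s t yc u by (simp add: r_distr m_assoc)
      have "s \<otimes> t \<in> carrier R" using s t by simp
      then have "x \<otimes> (s \<otimes> t) \<in> left_gen R Q" by (rule xQ)
      then have "(x \<otimes> (s \<otimes> t)) \<otimes> y \<in> left_gen R ?QY" by (rule LG_rmul[OF Q Y _ y])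
      moreover have "x \<otimes> s \<otimes> u \<in> left_gen R ?QY" using u s by auto
      ultimately show "x \<otimes> s \<otimes> (t \<otimes> y \<oplus> u) \<in> left_gen R ?QY" unfolding eq by (rule LG_add[OF QY])
    qed
  qed
  then show ?thesis using u s by auto
qed

lemma prods_carrier:
  assumes "\<forall>Q\<in>set Qs. Q \<subseteq> carrier R" shows "prods R Qs \<subseteq> carrier R"
proof
  fix z assume "z \<in> prods R Qs"
  then obtain qs where z: "z = foldr (\<lambda>x y. x \<otimes> y) qs \<one>" and l: "list_all2 (\<lambda>q Q. q \<in> Q) qs Qs"
    unfolding prods_def by blast
  have "set qs \<subseteq> carrier R" using l assms
    by (induction qs Qs rule: list_all2_induct) auto
  then have "foldr (\<lambda>x y. x \<otimes> y) qs \<one> \<in> carrier R" by (induction qs) auto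
  then show "z \<in> carrier R" using z by simp
qed

lemma lemmaA:
  assumes P: "prime_ideal_nc R P"
    and Qs: "\<forall>Q\<in>set Qs. Q \<subseteq> carrier R \<and> \<not> ext_ideal R Q \<subseteq> P"
  shows "\<exists>z\<in>left_gen R (prods R Qs). z \<notin> P"
  using Qs
proof (induction Qs)
  case Nil
  have "prods R [] = {\<one>}" unfolding prods_def by auto
  moreover have "\<one> \<notin> P" using P ideal.one_imp_carrier unfolding prime_ideal_nc_def by blast
  ultimately show ?case using LG_one by auto
next
  case (Cons Q Qs)
  then obtain u where u: "u \<in> left_gen R (prods R Qs)" and uP: "u \<notin> P" by auto
  have Qc: "Q \<subseteq> carrier R" and nQ: "\<not> ext_ideal R Q \<subseteq> P" using Cons.prems by auto
  then obtain y where y: "y \<in> ext_ideal R Q" and yP: "y \<notin> P" by auto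
  have pc: "prods R Qs \<subseteq> carrier R" using Cons.prems by (intro prods_carrier) auto
  have uc: "u \<in> carrier R" using u LG_carrier[OF pc] by auto
  have yc: "y \<in> carrier R" using y unfolding ext_ideal_def by auto
  obtain s where s: "s \<in> carrier R" and ysu: "y \<otimes> s \<otimes> u \<notin> P"
    using P yP uP yc uc unfolding prime_ideal_nc_def by blast
  have "y \<otimes> s \<otimes> u \<in> left_gen R {q \<otimes> p | q p. q \<in> Q \<and> p \<in> prods R Qs}"
    by (rule LG_key[OF Qc pc y s u])
  moreover have "{q \<otimes> p | q p. q \<in> Q \<and> p \<in> prods R Qs} \<subseteq> prods R (Q # Qs)"
  proof
    fix z assume "z \<in> {q \<otimes> p | q p. q \<in> Q \<and> p \<in> prods R Qs}"
    then obtain q qs where "z = q \<otimes> foldr (\<lambda>x y. x \<otimes> y) qs \<one>" "q \<in> Q" "list_all2 (\<lambda>q Q. q \<in> Q) qs Qs"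
      unfolding prods_def by blast
    then show "z \<in> prods R (Q # Qs)" unfolding prods_def
      by (intro CollectI exI[of _ "q # qs"]) auto
  qed
  ultimately show ?case using ysu LG_mono by blast
qed

end

lemma min_prime_below:
  assumes A: "ring A" and Q: "Q \<in> Spec A" and IQ: "I \<subseteq> Q"
  shows "\<exists>M. minimal_prime_over A I M \<and> M \<subseteq> Q"
proof -
  interpret ring A by (rule A)
  define Fam where "Fam = {Q' \<in> Spec A. I \<subseteq> Q' \<and> Q' \<subseteq> Q}"
  define Pr where "Pr = (\<lambda>a b :: 'a set. b \<subseteq> a)"
  have po: "partial_order_on Fam (relation_of Pr Fam)"
    by (rule partial_order_on_relation_ofI) (auto simp: Pr_def)
  have ch: "\<exists>u\<in>Fam. \<forall>a\<in>C. Pr a u" if C: "C \<in> Chains (relation_of Pr Fam)" for C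
  proof (cases "C = {}")
    case True
    then show ?thesis using Q IQ unfolding Fam_def by auto
  next
    case False
    have CF: "C \<subseteq> Fam" by (rule Chains_relation_of[OF C])
    have tot: "\<And>a b. a \<in> C \<Longrightarrow> b \<in> C \<Longrightarrow> a \<subseteq> b \<or> b \<subseteq> a"
      using C unfolding Chains_def relation_of_def Pr_def by blast
    have Cp: "\<And>c. c \<in> C \<Longrightarrow> prime_ideal_nc A c" using CF unfolding Fam_def Spec_def by auto
    have id: "ideal (\<Inter>C) A" by (rule i_Intersect) (use Cp False in \<open>auto simp: prime_ideal_nc_def\<close>)
    obtain c0 where c0: "c0 \<in> C" using False by auto
    have c0p: "ideal c0 A" "c0 \<noteq> carrier A" using Cp[OF c0] unfolding prime_ideal_nc_def by auto
    have c0c: "c0 \<subseteq> carrier A" using c0p(1) by (simp add: ideal.axioms(1) additive_subgroup.a_subset)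
    have ne: "\<Inter>C \<noteq> carrier A" using c0 c0c c0p(2) by blast
    have pr: "a \<in> \<Inter>C \<or> b \<in> \<Inter>C"
      if a: "a \<in> carrier A" and b: "b \<in> carrier A" and h: "\<forall>r\<in>carrier A. a \<otimes>\<^bsub>A\<^esub> r \<otimes>\<^bsub>A\<^esub> b \<in> \<Inter>C" for a b
    proof (rule ccontr)
      assume "\<not> (a \<in> \<Inter>C \<or> b \<in> \<Inter>C)"
      then obtain c1 c2 where c1: "c1 \<in> C" "a \<notin> c1" and c2: "c2 \<in> C" "b \<notin> c2" by blast
      obtain c where c: "c \<in> C" "a \<notin> c" "b \<notin> c" using tot[OF c1(1) c2(1)] c1 c2 by blast
      have "\<forall>r\<in>carrier A. a \<otimes>\<^bsub>A\<^esub> r \<otimes>\<^bsub>A\<^esub> b \<in> c" using h c(1) by blast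
      then have "a \<in> c \<or> b \<in> c" using Cp[OF c(1)] a b unfolding prime_ideal_nc_def by blast
      then show False using c by blast
    qed
    have "\<Inter>C \<in> Fam" unfolding Fam_def Spec_def prime_ideal_nc_def
      using id ne pr CF c0 unfolding Fam_def by blast
    moreover have "\<forall>a\<in>C. Pr a (\<Inter>C)" unfolding Pr_def by blast
    ultimately show ?thesis by blast
  qed
  obtain m where m: "m \<in> Fam" and mmin: "\<forall>a\<in>Fam. Pr m a \<longrightarrow> a = m"
    using predicate_Zorn[OF po ch] by blast
  have "minimal_prime_over A I m"
    unfolding minimal_prime_over_def
  proof (intro conjI ballI impI)
    show "m \<in> Spec A" "I \<subseteq> m" using m unfolding Fam_def by auto
    fix Q' assume "Q' \<in> Spec A" and h: "I \<subseteq> Q' \<and> Q' \<subseteq> m"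
    then have "Q' \<in> Fam" using m unfolding Fam_def by auto
    then show "Q' = m" using mmin h unfolding Pr_def by blast
  qed
  then show ?thesis using m unfolding Fam_def by blast
qed

lemma quot_carrier:
  assumes A: "ring A" and I: "ideal I A"
  shows "carrier (A Quot I) = (\<lambda>a. I +>\<^bsub>A\<^esub> a) ` carrier A"
  unfolding FactRing_def using A_RCOSETS_def'[of A I] by auto

lemma quot_zero_iff:
  assumes A: "ring A" and I: "ideal I A" and a: "a \<in> carrier A"
  shows "(I +>\<^bsub>A\<^esub> a = I) \<longleftrightarrow> a \<in> I"
proof -
  interpret ring A by (rule A)
  interpret Q: ring "A Quot I" by (rule ideal.quotient_is_ring[OF I])
  have "I \<in> carrier (A Quot I)" using Q.zero_closed by (simp add: FactRing_def)
  then have "{I} \<subseteq> carrier (A Quot I)" by auto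
  from canonical_proj_vimage_mem_iff[OF I this a] show ?thesis by simp
qed

lemma quot_hom:
  assumes A: "ring A" and I: "ideal I A"
  shows "(\<lambda>a. I +>\<^bsub>A\<^esub> a) \<in> ring_hom A (A Quot I)"
  using ideal.rcos_ring_hom[OF I] by simp

lemma quot_foldr:
  assumes A: "ring A" and I: "ideal I A" and xs: "set xs \<subseteq> carrier A"
  shows "I +>\<^bsub>A\<^esub> (foldr (\<lambda>x y. x \<otimes>\<^bsub>A\<^esub> y) xs \<one>\<^bsub>A\<^esub>)
       = foldr (\<lambda>x y. x \<otimes>\<^bsub>A Quot I\<^esub> y) (map (\<lambda>a. I +>\<^bsub>A\<^esub> a) xs) \<one>\<^bsub>A Quot I\<^esub>"
  using xs
proof (induction xs)
  case Nil
  then show ?case using ring_hom_one[OF quot_hom[OF A I]] by simp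
next
  case (Cons x xs)
  have xc: "x \<in> carrier A" and xsc: "set xs \<subseteq> carrier A" using Cons.prems by auto
  have fc: "foldr (\<lambda>x y. x \<otimes>\<^bsub>A\<^esub> y) xs \<one>\<^bsub>A\<^esub> \<in> carrier A"
    using xsc A by (induction xs) (auto intro: ring.ring_simprules)
  have "I +>\<^bsub>A\<^esub> (x \<otimes>\<^bsub>A\<^esub> foldr (\<lambda>x y. x \<otimes>\<^bsub>A\<^esub> y) xs \<one>\<^bsub>A\<^esub>)
      = (I +>\<^bsub>A\<^esub> x) \<otimes>\<^bsub>A Quot I\<^esub> (I +>\<^bsub>A\<^esub> foldr (\<lambda>x y. x \<otimes>\<^bsub>A\<^esub> y) xs \<one>\<^bsub>A\<^esub>)"
    by (rule ring_hom_mult[OF quot_hom[OF A I] xc fc])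
  then show ?case using Cons.IH[OF xsc] by simp
qed

lemma quot_prime_pullback:
  assumes A: "ring A" and I: "ideal I A" and P: "prime_ideal_nc (A Quot I) P'"
  shows "prime_ideal_nc A {x \<in> carrier A. I +>\<^bsub>A\<^esub> x \<in> P'}" and "I \<subseteq> {x \<in> carrier A. I +>\<^bsub>A\<^esub> x \<in> P'}"
proof -
  interpret ring A by (rule A)
  interpret Q: ring "A Quot I" by (rule ideal.quotient_is_ring[OF I])
  let ?h = "\<lambda>a. I +>\<^bsub>A\<^esub> a"
  have hom: "?h \<in> ring_hom A (A Quot I)" by (rule quot_hom[OF A I])
  have Pid: "ideal P' (A Quot I)" and Pne: "P' \<noteq> carrier (A Quot I)"
    and Ppr: "\<And>a b. a \<in> carrier (A Quot I) \<Longrightarrow> b \<in> carrier (A Quot I) \<Longrightarrow>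
        (\<forall>r\<in>carrier (A Quot I). a \<otimes>\<^bsub>A Quot I\<^esub> r \<otimes>\<^bsub>A Quot I\<^esub> b \<in> P') \<Longrightarrow> a \<in> P' \<or> b \<in> P'"
    using P unfolding prime_ideal_nc_def by auto
  have id: "ideal {x \<in> carrier A. ?h x \<in> P'} A"
    by (rule ring_hom_ring.ideal_vimage[OF ideal.rcos_ring_hom_ring[OF I] Pid])
  have one: "\<one>\<^bsub>A Quot I\<^esub> \<notin> P'" using Pne ideal.one_imp_carrier[OF Pid] by blast
  have "?h \<one>\<^bsub>A\<^esub> = \<one>\<^bsub>A Quot I\<^esub>" by (rule ring_hom_one[OF hom])
  then have ne: "{x \<in> carrier A. ?h x \<in> P'} \<noteq> carrier A"
  proof -
    assume h1: "?h \<one>\<^bsub>A\<^esub> = \<one>\<^bsub>A Quot I\<^esub>"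
    show ?thesis
    proof
      assume "{x \<in> carrier A. ?h x \<in> P'} = carrier A"
      then have "\<one>\<^bsub>A\<^esub> \<in> {x \<in> carrier A. ?h x \<in> P'}" using one_closed by simp
      then show False using one h1 by simp
    qed
  qed
  have pr: "a \<in> {x \<in> carrier A. ?h x \<in> P'} \<or> b \<in> {x \<in> carrier A. ?h x \<in> P'}"
    if a: "a \<in> carrier A" and b: "b \<in> carrier A" and h: "\<forall>r\<in>carrier A. a \<otimes>\<^bsub>A\<^esub> r \<otimes>\<^bsub>A\<^esub> b \<in> {x \<in> carrier A. ?h x \<in> P'}" for a b
  proof -
    have "\<forall>\<rho>\<in>carrier (A Quot I). ?h a \<otimes>\<^bsub>A Quot I\<^esub> \<rho> \<otimes>\<^bsub>A Quot I\<^esub> ?h b \<in> P'"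
    proof
      fix \<rho> assume "\<rho> \<in> carrier (A Quot I)"
      then obtain r where r: "r \<in> carrier A" "\<rho> = ?h r" using quot_carrier[OF A I] by auto
      have "?h (a \<otimes>\<^bsub>A\<^esub> r \<otimes>\<^bsub>A\<^esub> b) = ?h (a \<otimes>\<^bsub>A\<^esub> r) \<otimes>\<^bsub>A Quot I\<^esub> ?h b" using ring_hom_mult[OF hom] a r b by simp
      also have "\<dots> = ?h a \<otimes>\<^bsub>A Quot I\<^esub> ?h r \<otimes>\<^bsub>A Quot I\<^esub> ?h b" using ring_hom_mult[OF hom] a r by simp
      finally show "?h a \<otimes>\<^bsub>A Quot I\<^esub> \<rho> \<otimes>\<^bsub>A Quot I\<^esub> ?h b \<in> P'" using h r by auto
    qed
    moreover have "?h a \<in> carrier (A Quot I)" "?h b \<in> carrier (A Quot I)" using a b quot_carrier[OF A I] by auto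
    ultimately have "?h a \<in> P' \<or> ?h b \<in> P'" using Ppr by blast
    then show ?thesis using a b by auto
  qed
  show "prime_ideal_nc A {x \<in> carrier A. ?h x \<in> P'}"
    unfolding prime_ideal_nc_def using id ne pr by blast
  show "I \<subseteq> {x \<in> carrier A. ?h x \<in> P'}"
  proof
    fix i assume i: "i \<in> I"
    have ic: "i \<in> carrier A" using additive_subgroup.a_subset[OF ideal.axioms(1)[OF I]] i by blast
    have "?h i = I" using quot_zero_iff[OF A I ic] i by simp
    moreover have "I \<in> P'" using ideal.axioms(1)[OF Pid] additive_subgroup.zero_closed by (fastforce simp: FactRing_def)
    ultimately show "i \<in> {x \<in> carrier A. ?h x \<in> P'}" using ic by simp
  qed
qed

lemma foldr_in_ideal:
  assumes B: "ring B" and J: "ideal J B" and zs: "set zs \<subseteq> carrier B" and z: "z \<in> set zs" and zJ: "z \<in> J"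
  shows "foldr (\<lambda>x y. x \<otimes>\<^bsub>B\<^esub> y) zs \<one>\<^bsub>B\<^esub> \<in> J"
  using zs z
proof (induction zs)
  case Nil
  then show ?case by simp
next
  case (Cons x xs)
  interpret ring B by (rule B)
  have xc: "x \<in> carrier B" and xsc: "set xs \<subseteq> carrier B" using Cons.prems by auto
  have fc: "foldr (\<lambda>x y. x \<otimes>\<^bsub>B\<^esub> y) xs \<one>\<^bsub>B\<^esub> \<in> carrier B"
    using xsc by (induction xs) auto
  show ?case
  proof (cases "z = x")
    case True
    then show ?thesis using ideal.I_r_closed[OF J zJ fc] by simp
  next
    case False
    then have "z \<in> set xs" using Cons.prems by auto
    then have "foldr (\<lambda>x y. x \<otimes>\<^bsub>B\<^esub> y) xs \<one>\<^bsub>B\<^esub> \<in> J" using Cons.IH xsc by blast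
    then show ?thesis using ideal.I_l_closed[OF J _ xc] by simp
  qed
qed

lemma la2_set:
  assumes "list_all2 (\<lambda>q Q. q \<in> Q) qs Ls" and "\<forall>Q\<in>set Ls. Q \<subseteq> C"
  shows "set qs \<subseteq> C"
  using assms by (induction qs Ls rule: list_all2_induct) auto

context ring begin

lemma foldr_closed: "set us \<subseteq> carrier R \<Longrightarrow> b \<in> carrier R \<Longrightarrow> foldr (\<lambda>x y. x \<otimes> y) us b \<in> carrier R"
  by (induction us) auto

lemma foldr_acc: "set us \<subseteq> carrier R \<Longrightarrow> b \<in> carrier R \<Longrightarrow>
    foldr (\<lambda>x y. x \<otimes> y) us b = foldr (\<lambda>x y. x \<otimes> y) us \<one> \<otimes> b"
proof (induction us)
  case Nil
  then show ?case by simp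
next
  case (Cons u us)
  have "foldr (\<lambda>x y. x \<otimes> y) us \<one> \<in> carrier R" using Cons.prems by (intro foldr_closed) auto
  then show ?case using Cons by (simp add: m_assoc)
qed

lemma blocks:
  assumes Lc: "\<forall>Q\<in>set Ls. Q \<subseteq> carrier R"
    and B: "\<And>qs. list_all2 (\<lambda>q Q. q \<in> Q) qs Ls \<Longrightarrow> foldr (\<lambda>x y. x \<otimes> y) qs \<one> \<in> N"
  shows "list_all2 (\<lambda>q Q. q \<in> Q) qs (concat (replicate k Ls)) \<Longrightarrow>
    \<exists>ps. length ps = k \<and> set ps \<subseteq> N \<and> foldr (\<lambda>x y. x \<otimes> y) qs \<one> = foldr (\<lambda>x y. x \<otimes> y) ps \<one>"
proof (induction k arbitrary: qs)
  case 0
  then show ?case by (intro exI[of _ "[]"]) simp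
next
  case (Suc k)
  have "list_all2 (\<lambda>q Q. q \<in> Q) qs (Ls @ concat (replicate k Ls))" using Suc.prems by simp
  then obtain us vs where uv: "qs = us @ vs" "list_all2 (\<lambda>q Q. q \<in> Q) us Ls"
      "list_all2 (\<lambda>q Q. q \<in> Q) vs (concat (replicate k Ls))"
    unfolding list_all2_append2 by blast
  obtain ps where ps: "length ps = k" "set ps \<subseteq> N" "foldr (\<lambda>x y. x \<otimes> y) vs \<one> = foldr (\<lambda>x y. x \<otimes> y) ps \<one>"
    using Suc.IH[OF uv(3)] by blast
  have usc: "set us \<subseteq> carrier R" by (rule la2_set[OF uv(2) Lc])
  have Lc2: "\<forall>Q\<in>set (concat (replicate k Ls)). Q \<subseteq> carrier R" using Lc by auto
  have vsc: "set vs \<subseteq> carrier R" by (rule la2_set[OF uv(3) Lc2])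
  have fv: "foldr (\<lambda>x y. x \<otimes> y) vs \<one> \<in> carrier R" using vsc by (intro foldr_closed) auto
  have "foldr (\<lambda>x y. x \<otimes> y) qs \<one> = foldr (\<lambda>x y. x \<otimes> y) us (foldr (\<lambda>x y. x \<otimes> y) vs \<one>)"
    using uv(1) by simp
  also have "\<dots> = foldr (\<lambda>x y. x \<otimes> y) us \<one> \<otimes> foldr (\<lambda>x y. x \<otimes> y) vs \<one>"
    by (rule foldr_acc[OF usc fv])
  also have "\<dots> = foldr (\<lambda>x y. x \<otimes> y) (foldr (\<lambda>x y. x \<otimes> y) us \<one> # ps) \<one>" using ps(3) by simp
  finally show ?case using ps B[OF uv(2)]
    by (intro exI[of _ "foldr (\<lambda>x y. x \<otimes> y) us \<one> # ps"]) auto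
qed

end

theorem lemma3p14:
  fixes S :: "('a, 'b) ring_scheme" and H :: "'a set"
  assumes "ring S"
    and "subring H S"
    and "goldie_hyp (S\<lparr>carrier := H\<rparr>)"
    and "goldie_hyp S"
    and "P \<in> Spec S"
  shows "\<exists>Q. minimal_prime_over (S\<lparr>carrier := H\<rparr>) (P \<inter> H) Q \<and> ext_ideal S Q \<subseteq> P"
proof -
  have ringS: "ring S" by (rule assms(1))
  interpret S: ring S by (rule ringS)
  define R where "R = S\<lparr>carrier := H\<rparr>"
  have ringR: "ring R" unfolding R_def by (rule S.subring_is_ring[OF assms(2)])
  have HS: "H \<subseteq> carrier S" by (rule subringE(1)[OF assms(2)])
  have Rc: "carrier R = H" unfolding R_def by simp
  have Rm: "monoid.mult R = monoid.mult S" "monoid.one R = monoid.one S" "ring.zero R = ring.zero S" "ring.add R = ring.add S" unfolding R_def by simp_all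
  have Pid: "ideal P S" and Pne: "P \<noteq> carrier S" using assms(5) unfolding Spec_def prime_ideal_nc_def by auto
  have Pp: "prime_ideal_nc S P" using assms(5) unfolding Spec_def by simp
  define I where "I = P \<inter> H"
  have hom: "id \<in> ring_hom R S"
    by (rule ring_hom_memI) (use HS in \<open>auto simp: R_def\<close>)
  have Iid: "ideal I R"
  proof -
    have "ideal {r \<in> carrier R. id r \<in> P} R"
      by (rule ring_hom_ring.ideal_vimage[OF ring_hom_ringI2[OF ringR ringS hom] Pid])
    moreover have "{r \<in> carrier R. id r \<in> P} = I" unfolding I_def Rc by auto
    ultimately show ?thesis by simp
  qed
  have IH: "I \<subseteq> H" unfolding I_def by auto
  have IP: "I \<subseteq> P" unfolding I_def by auto
  define Qall where "Qall = {Q \<in> Spec R. I \<subseteq> Q}"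
  define N where "N = H \<inter> \<Inter>Qall"
  have QallH: "\<And>Q. Q \<in> Qall \<Longrightarrow> Q \<subseteq> H"
  proof -
    fix Q assume "Q \<in> Qall"
    then have "ideal Q R" unfolding Qall_def Spec_def prime_ideal_nc_def by auto
    then show "Q \<subseteq> H" using additive_subgroup.a_subset[OF ideal.axioms(1)] Rc by fastforce
  qed
  have Nid: "ideal N R"
  proof (cases "Qall = {}")
    case True
    then have "N = carrier R" unfolding N_def Rc by simp
    then show ?thesis using ring.oneideal[OF ringR] by simp
  next
    case False
    then have "N = \<Inter>Qall" unfolding N_def using QallH by blast
    moreover have "ideal (\<Inter>Qall) R"
      by (rule ring.i_Intersect[OF ringR]) (use False in \<open>auto simp: Qall_def Spec_def prime_ideal_nc_def\<close>)
    ultimately show ?thesis by simp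
  qed
  have IN: "I \<subseteq> N" unfolding N_def Qall_def using IH by auto
  interpret QN: ring "R Quot N" by (rule ideal.quotient_is_ring[OF Nid])
  have zN: "\<zero>\<^bsub>R Quot N\<^esub> = N" by (simp add: FactRing_def)
  have homN: "(\<lambda>a. N +>\<^bsub>R\<^esub> a) \<in> ring_hom R (R Quot N)" by (rule quot_hom[OF ringR Nid])
  have sp: "semiprime_ring (R Quot N)"
    unfolding semiprime_ring_def
  proof (intro ballI impI)
    fix Xe assume Xe: "Xe \<in> carrier (R Quot N)"
      and h: "\<forall>r\<in>carrier (R Quot N). Xe \<otimes>\<^bsub>R Quot N\<^esub> r \<otimes>\<^bsub>R Quot N\<^esub> Xe = \<zero>\<^bsub>R Quot N\<^esub>"
    obtain a where a: "a \<in> carrier R" "Xe = N +>\<^bsub>R\<^esub> a" using Xe quot_carrier[OF ringR Nid] by auto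
    have ara: "a \<otimes>\<^bsub>R\<^esub> r \<otimes>\<^bsub>R\<^esub> a \<in> N" if r: "r \<in> carrier R" for r
    proof -
      have c: "a \<otimes>\<^bsub>R\<^esub> r \<otimes>\<^bsub>R\<^esub> a \<in> carrier R" using a r ringR by (simp add: ring.ring_simprules(5))
      have "N +>\<^bsub>R\<^esub> (a \<otimes>\<^bsub>R\<^esub> r \<otimes>\<^bsub>R\<^esub> a) = (N +>\<^bsub>R\<^esub> (a \<otimes>\<^bsub>R\<^esub> r)) \<otimes>\<^bsub>R Quot N\<^esub> (N +>\<^bsub>R\<^esub> a)"
        using ring_hom_mult[OF homN] a r ringR by (simp add: ring.ring_simprules(5))
      also have "\<dots> = Xe \<otimes>\<^bsub>R Quot N\<^esub> (N +>\<^bsub>R\<^esub> r) \<otimes>\<^bsub>R Quot N\<^esub> Xe"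
        using ring_hom_mult[OF homN] a r by simp
      also have "\<dots> = N"
      proof -
        have "N +>\<^bsub>R\<^esub> r \<in> carrier (R Quot N)" using r quot_carrier[OF ringR Nid] by auto
        from h[rule_format, OF this] show ?thesis using zN by simp
      qed
      finally show ?thesis using quot_zero_iff[OF ringR Nid c] by simp
    qed
    have "a \<in> Q" if Q: "Q \<in> Qall" for Q
    proof -
      have Qp: "prime_ideal_nc R Q" using Q unfolding Qall_def Spec_def by auto
      have "\<forall>r\<in>carrier R. a \<otimes>\<^bsub>R\<^esub> r \<otimes>\<^bsub>R\<^esub> a \<in> Q" using ara Q unfolding N_def by blast
      then show ?thesis using Qp a(1) unfolding prime_ideal_nc_def by blast
    qed
    then have "a \<in> N" using a(1) Rc unfolding N_def by blast
    then show "Xe = \<zero>\<^bsub>R Quot N\<^esub>" using quot_zero_iff[OF ringR Nid a(1)] a(2) zN by simp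
  qed
  have GR: "\<forall>J. ideal J R \<longrightarrow> (semiprime_ring (R Quot J) \<longrightarrow> left_goldie (R Quot J) \<or> right_goldie (R Quot J)) \<and>
        nilpotent_set (R Quot J) (prime_radical (R Quot J))"
    unfolding R_def using assms(3) unfolding goldie_hyp_def .
  have GN: "left_goldie (R Quot N) \<or> right_goldie (R Quot N)" using GR[rule_format, OF Nid] sp by simp
  have "\<exists>F. finite F \<and> F \<subseteq> Spec (R Quot N) \<and> carrier (R Quot N) \<inter> \<Inter>F = {\<zero>\<^bsub>R Quot N\<^esub>}"
    by (rule finite_primes[OF ideal.quotient_is_ring[OF Nid] sp GN])
  then obtain F where F0: "finite F \<and> F \<subseteq> Spec (R Quot N) \<and> carrier (R Quot N) \<inter> \<Inter>F = {\<zero>\<^bsub>R Quot N\<^esub>}" ..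
  have F: "finite F" "F \<subseteq> Spec (R Quot N)" "carrier (R Quot N) \<inter> \<Inter>F = {\<zero>\<^bsub>R Quot N\<^esub>}"
    using F0 by simp_all
  define pb where "pb P' = {x \<in> carrier R. N +>\<^bsub>R\<^esub> x \<in> P'}" for P'
  have "\<exists>Ls. set Ls = pb ` F" by (rule finite_list[OF finite_imageI[OF F(1)]])
  then obtain Ls where Ls: "set Ls = pb ` F" ..
  have Ls_prop: "Q \<in> Spec R \<and> N \<subseteq> Q \<and> Q \<subseteq> H" if Q: "Q \<in> set Ls" for Q
  proof -
    obtain P' where P': "P' \<in> F" "Q = pb P'" using Q Ls by auto
    have pp: "prime_ideal_nc (R Quot N) P'" using P' F(2) unfolding Spec_def by auto
    have A1: "prime_ideal_nc R (pb P')" unfolding pb_def by (rule quot_prime_pullback(1)[OF ringR Nid pp])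
    have A2: "N \<subseteq> pb P'" unfolding pb_def by (rule quot_prime_pullback(2)[OF ringR Nid pp])
    have A3: "pb P' \<subseteq> H" unfolding pb_def Rc by blast
    show ?thesis using A1 A2 A3 P'(2) unfolding Spec_def by simp
  qed
  have LsS: "\<forall>Q\<in>set Ls. Q \<subseteq> carrier S" using Ls_prop HS by blast
  have block: "foldr (\<lambda>x y. x \<otimes>\<^bsub>S\<^esub> y) qs \<one>\<^bsub>S\<^esub> \<in> N" if qs: "list_all2 (\<lambda>q Q. q \<in> Q) qs Ls" for qs
  proof -
    have qsH: "set qs \<subseteq> H" using la2_set[OF qs] Ls_prop by blast
    let ?h = "\<lambda>a. N +>\<^bsub>R\<^esub> a"
    let ?y = "foldr (\<lambda>x y. x \<otimes>\<^bsub>R\<^esub> y) qs \<one>\<^bsub>R\<^esub>"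
    have yc: "?y \<in> carrier R" using ring.foldr_closed[OF ringR, of qs "\<one>\<^bsub>R\<^esub>"] qsH Rc ring.ring_simprules(6)[OF ringR] by simp
    have hy: "?h ?y = foldr (\<lambda>x y. x \<otimes>\<^bsub>R Quot N\<^esub> y) (map ?h qs) \<one>\<^bsub>R Quot N\<^esub>"
      by (rule quot_foldr[OF ringR Nid]) (use qsH Rc in simp)
    have mc: "set (map ?h qs) \<subseteq> carrier (R Quot N)" using qsH Rc quot_carrier[OF ringR Nid] by auto
    have "?h ?y \<in> P'" if P': "P' \<in> F" for P'
    proof -
      have "pb P' \<in> set Ls" using Ls P' by auto
      then obtain i where i: "i < length Ls" "Ls ! i = pb P'" by (metis in_set_conv_nth)
      have li: "length qs = length Ls" using qs by (rule list_all2_lengthD)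
      have "qs ! i \<in> Ls ! i" using qs i(1) by (simp add: list_all2_conv_all_nth)
      then have qi: "?h (qs ! i) \<in> P'" using i(2) unfolding pb_def by simp
      have Pid': "ideal P' (R Quot N)" using P' F(2) unfolding Spec_def prime_ideal_nc_def by auto
      have "?h (qs ! i) \<in> set (map ?h qs)" using i(1) li by simp
      from foldr_in_ideal[OF ideal.quotient_is_ring[OF Nid] Pid' mc this qi] show ?thesis using hy by simp
    qed
    moreover have "?h ?y \<in> carrier (R Quot N)" using yc quot_carrier[OF ringR Nid] by auto
    ultimately have "?h ?y \<in> carrier (R Quot N) \<inter> \<Inter>F" by blast
    then have "?h ?y = N" using F(3) zN by auto
    then have "?y \<in> N" using quot_zero_iff[OF ringR Nid yc] by simp
    then show ?thesis using Rm by simp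
  qed
  have nilI: "nilpotent_set (R Quot I) (prime_radical (R Quot I))" using GR[rule_format, OF Iid] by simp
  then obtain k where k: "\<And>xs. length xs = k \<and> set xs \<subseteq> prime_radical (R Quot I) \<Longrightarrow>
      foldr (\<lambda>x y. x \<otimes>\<^bsub>R Quot I\<^esub> y) xs \<one>\<^bsub>R Quot I\<^esub> = \<zero>\<^bsub>R Quot I\<^esub>"
    unfolding nilpotent_set_def by blast
  have nil: "foldr (\<lambda>x y. x \<otimes>\<^bsub>S\<^esub> y) ps \<one>\<^bsub>S\<^esub> \<in> I" if ps: "length ps = k" "set ps \<subseteq> N" for ps
  proof -
    let ?h = "\<lambda>a. I +>\<^bsub>R\<^esub> a"
    have NH: "N \<subseteq> H" unfolding N_def by auto
    have psH: "set ps \<subseteq> carrier R" using ps(2) NH Rc by auto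
    have rad: "?h x \<in> prime_radical (R Quot I)" if x: "x \<in> N" for x
    proof -
      have xc: "x \<in> carrier R" using x NH Rc by auto
      have "?h x \<in> P'" if P': "P' \<in> Spec (R Quot I)" for P'
      proof -
        have pp: "prime_ideal_nc (R Quot I) P'" using P' unfolding Spec_def by simp
        have "{z \<in> carrier R. ?h z \<in> P'} \<in> Qall"
          using quot_prime_pullback[OF ringR Iid pp] unfolding Qall_def Spec_def by auto
        then have "x \<in> {z \<in> carrier R. ?h z \<in> P'}" using x unfolding N_def by blast
        then show ?thesis by simp
      qed
      moreover have "?h x \<in> carrier (R Quot I)" using xc quot_carrier[OF ringR Iid] by auto
      ultimately show ?thesis unfolding prime_radical_def by blast
    qed
    have "length (map ?h ps) = k \<and> set (map ?h ps) \<subseteq> prime_radical (R Quot I)" using ps rad by auto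
    then have "foldr (\<lambda>x y. x \<otimes>\<^bsub>R Quot I\<^esub> y) (map ?h ps) \<one>\<^bsub>R Quot I\<^esub> = \<zero>\<^bsub>R Quot I\<^esub>" by (rule k)
    then have "?h (foldr (\<lambda>x y. x \<otimes>\<^bsub>R\<^esub> y) ps \<one>\<^bsub>R\<^esub>) = I"
      using quot_foldr[OF ringR Iid psH] by (simp add: FactRing_def)
    moreover have "foldr (\<lambda>x y. x \<otimes>\<^bsub>R\<^esub> y) ps \<one>\<^bsub>R\<^esub> \<in> carrier R"
      using ring.foldr_closed[OF ringR psH] ring.ring_simprules(6)[OF ringR] by simp
    ultimately have "foldr (\<lambda>x y. x \<otimes>\<^bsub>R\<^esub> y) ps \<one>\<^bsub>R\<^esub> \<in> I" using quot_zero_iff[OF ringR Iid] by blast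
    then show ?thesis using Rm by simp
  qed
  have prodsI: "prods S (concat (replicate k Ls)) \<subseteq> I"
  proof
    fix z assume "z \<in> prods S (concat (replicate k Ls))"
    then obtain qs where z: "z = foldr (\<lambda>x y. x \<otimes>\<^bsub>S\<^esub> y) qs \<one>\<^bsub>S\<^esub>"
      and qs: "list_all2 (\<lambda>q Q. q \<in> Q) qs (concat (replicate k Ls))"
      unfolding prods_def by blast
    obtain ps where "length ps = k" "set ps \<subseteq> N" "foldr (\<lambda>x y. x \<otimes>\<^bsub>S\<^esub> y) qs \<one>\<^bsub>S\<^esub> = foldr (\<lambda>x y. x \<otimes>\<^bsub>S\<^esub> y) ps \<one>\<^bsub>S\<^esub>"
      using S.blocks[OF LsS block qs] by blast
    then show "z \<in> I" using nil z by simp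
  qed
  have "\<exists>Q\<in>set Ls. ext_ideal S Q \<subseteq> P"
  proof (rule ccontr)
    assume "\<not> ?thesis"
    then have "\<forall>Q\<in>set (concat (replicate k Ls)). Q \<subseteq> carrier S \<and> \<not> ext_ideal S Q \<subseteq> P"
      using LsS by auto
    then obtain z where z: "z \<in> left_gen S (prods S (concat (replicate k Ls)))" "z \<notin> P"
      using S.lemmaA[OF Pp] by blast
    have "left_gen S (prods S (concat (replicate k Ls))) \<subseteq> P"
      using S.LG_ideal[OF Pid] prodsI IP by blast
    then show False using z by blast
  qed
  then obtain Q where Q: "Q \<in> set Ls" "ext_ideal S Q \<subseteq> P" by blast
  have QS: "Q \<in> Spec R" "I \<subseteq> Q" using Ls_prop[OF Q(1)] IN by auto
  obtain M where M: "minimal_prime_over R I M" "M \<subseteq> Q"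
    using min_prime_below[OF ringR QS] by blast
  have "ext_ideal S M \<subseteq> ext_ideal S Q"
    using S.LG_mono[OF M(2)] unfolding ext_ideal_def by blast
  then show ?thesis using M Q(2) unfolding R_def I_def by blast
qed

end
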